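(* Let $X\sim P_X$, teacher partition $(\Omega_k^\star)$ with experts $f_k^\star$, $\mu=\sum_k\mathbf{1}_{\Omega_k^\star}f_k^\star$, $|\mu(X)|\le B$ a.s., $Y=\mu(X)+\xi$ with $\mathbb{E}[\xi\mid X]=0$, $\mathbb{E}\xi^2<\infty$. Let student experts satisfy $\sup_{k,x}|f_k(x;\theta_k)|\le B_{\mathrm{stu}}$ for all parameters considered. Assume there are $\gamma_{\mathrm{gap}}>0$, $\eta_{\mathrm{gap}}\in[0,1)$ such that for every $\theta$ considered there is a permutation $\pi$ with $P_X(\{x\in\Omega_k^\star:(f_j(x;\theta_j)-f_k^\star(x))^2\le\gamma_{\mathrm{gap}}\})\le\eta_{\mathrm{gap}}$ for all $k$ and $j\ne\pi(k)$ (such $\pi$ is an admissible matching for $\theta$). Fix $\varepsilon\in(0,1/2)$ with $2\varepsilon B_{\mathrm{stu}}\le\frac12\sqrt{\gamma_{\mathrm{gap}}}$. Then for all $(\theta,\phi)$, all $\tau>0$ and every admissible matching $\pi$ for $\theta$, \[\mathbb{E}\big[(\mu(X)-h_{\theta,\phi,\tau}(X))^2\mathbf{1}_{\{X\in\mathcal{G}_\varepsilon(\tau;\phi)\}}\big]\ge\frac{\gamma_{\mathrm{gap}}}{4}\max\{P_X(\mathcal{E}_{\mathrm{mis}}(\pi;\theta,\phi,\tau))-K(K-1)\eta_{\mathrm{gap}},0\}.\] Consequently, if $\widetilde L_\tau(\theta,\phi)\le R$ then $P_X(\mathcal{E}_{\mathrm{mis}}(\pi;\theta,\phi,\tau))\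le\frac{4R}{\gamma_{\mathrm{gap}}}+K(K-1)\eta_{\mathrm{gap}}$.
   Context: $p_k^{(\tau)}(x;\phi)=e^{a_k(x;\phi)/\tau}/\sum_je^{a_j(x;\phi)/\tau}$; $h_{\theta,\phi,\tau}=\sum_kp_k^{(\tau)}f_k(\cdot;\theta_k)$; $\widetilde L_\tau(\theta,\phi)=\mathbb{E}[(\mu(X)-h_{\theta,\phi,\tau}(X))^2]$; $\mathcal{G}_\varepsilon(\tau;\phi)=\{x:\max_kp_k^{(\tau)}(x;\phi)>1-\varepsilon\}$; $\mathcal{E}_{\mathrm{mis}}(\pi;\theta,\phi,\tau)=\{x\in\mathcal{X}:x\in\Omega_k^\star\text{ and }p_j^{(\tau)}(x;\phi)\ge1-\varepsilon\text{ for some }k\text{ and some }j\ne\pi(k)\}\cap\mathcal{G}_\varepsilon(\tau;\phi)$. *)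

theory Defs
  imports "HOL-Probability.Probability"
begin

definition teacher_mu :: "nat \<Rightarrow> (nat \<Rightarrow> 'x set) \<Rightarrow> (nat \<Rightarrow> 'x \<Rightarrow> real) \<Rightarrow> 'x \<Rightarrow> real" where
  "teacher_mu K Omega fstar x = (\<Sum>k<K. indicator (Omega k) x * fstar k x)"

text \<open>Tempered softmax gate p_k^(tau)(x;phi), a k phi x = a_k(x;phi).\<close>
definition gate :: "nat \<Rightarrow> (nat \<Rightarrow> 'q \<Rightarrow> 'x \<Rightarrow> real) \<Rightarrow> 'q \<Rightarrow> real \<Rightarrow> nat \<Rightarrow> 'x \<Rightarrow> real" where
  "gate K a phi tau k x = exp (a k phi x / tau) / (\<Sum>j<K. exp (a j phi x / tau))"

text \<open>Student mixture h_{theta,phi,tau}; f k t x = f_k(x;t), theta k = theta_k.\<close>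
definition student_h :: "nat \<Rightarrow> (nat \<Rightarrow> 'p \<Rightarrow> 'x \<Rightarrow> real) \<Rightarrow> (nat \<Rightarrow> 'p) \<Rightarrow>
    (nat \<Rightarrow> 'q \<Rightarrow> 'x \<Rightarrow> real) \<Rightarrow> 'q \<Rightarrow> real \<Rightarrow> 'x \<Rightarrow> real" where
  "student_h K f theta a phi tau x = (\<Sum>k<K. gate K a phi tau k x * f k (theta k) x)"

definition confident_region :: "'x measure \<Rightarrow> nat \<Rightarrow> (nat \<Rightarrow> 'q \<Rightarrow> 'x \<Rightarrow> real) \<Rightarrow> 'q \<Rightarrow> real \<Rightarrow> real \<Rightarrow> 'x set" where
  "confident_region N K a phi tau eps =
     {x \<in> space N. Max ((\<lambda>k. gate K a phi tau k x) ` {..<K}) > 1 - eps}"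

definition mis_event :: "'x measure \<Rightarrow> nat \<Rightarrow> (nat \<Rightarrow> 'x set) \<Rightarrow> (nat \<Rightarrow> nat) \<Rightarrow>
    (nat \<Rightarrow> 'q \<Rightarrow> 'x \<Rightarrow> real) \<Rightarrow> 'q \<Rightarrow> real \<Rightarrow> real \<Rightarrow> 'x set" where
  "mis_event N K Omega pm a phi tau eps =
     {x \<in> space N. \<exists>k<K. \<exists>j<K. x \<in> Omega k \<and> j \<noteq> pm k \<and> gate K a phi tau j x \<ge> 1 - eps}
     \<inter> confident_region N K a phi tau eps"

definition admissible_matching :: "'x measure \<Rightarrow> nat \<Rightarrow> (nat \<Rightarrow> 'x set) \<Rightarrow> (nat \<Rightarrow> 'x \<Rightarrow> real) \<Rightarrow>
    (nat \<Rightarrow> 'p \<Rightarrow> 'x \<Rightarrow> real) \<Rightarrow> real \<Rightarrow> real \<Rightarrow> (nat \<Rightarrow> 'p) \<Rightarrow> (nat \<Rightarrow> nat) \<Rightarrow> bool" where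
  "admissible_matching PX K Omega fstar f gamma eta theta pm \<longleftrightarrow>
     pm permutes {..<K} \<and>
     (\<forall>k<K. \<forall>j<K. j \<noteq> pm k \<longrightarrow>
        measure PX {x \<in> Omega k. (f j (theta j) x - fstar k x)\<^sup>2 \<le> gamma} \<le> eta)"

end

theory Submission
  imports Defs
begin

lemma gate_pos: "K \<ge> 1 \<Longrightarrow> gate K a phi tau k x > 0"
proof -
  assume "K \<ge> 1" then have "0 \<in> {..<K}" by auto
  then show ?thesis unfolding gate_def
    by (intro divide_pos_pos exp_gt_zero sum_pos) auto
qed

lemma gate_sum: "K \<ge> 1 \<Longrightarrow> (\<Sum>k<K. gate K a phi tau k x) = 1"
proof -
  assume "K \<ge> 1"
  then have "0 \<in> {..<K}" by auto
  then have "(\<Sum>j<K. exp (a j phi x / tau)) > 0" by (intro sum_pos) auto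
  then show ?thesis unfolding gate_def by (simp add: sum_divide_distrib[symmetric])
qed

lemma conv_bound:
  fixes p F :: "nat \<Rightarrow> real"
  assumes "\<forall>i<K. p i \<ge> 0" "(\<Sum>i<K. p i) = 1" "\<forall>i<K. \<bar>F i\<bar> \<le> C"
  shows "\<bar>(\<Sum>i<K. p i * F i)\<bar> \<le> C"
proof -
  have "\<bar>(\<Sum>i<K. p i * F i)\<bar> \<le> (\<Sum>i<K. \<bar>p i * F i\<bar>)" by (rule sum_abs)
  also have "\<dots> \<le> (\<Sum>i<K. p i * C)"
    using assms(1,3) by (intro sum_mono) (auto simp: abs_mult intro: mult_left_mono)
  also have "\<dots> = C" using assms(2) by (simp add: sum_distrib_right[symmetric])
  finally show ?thesis .
qed

lemma conv_close:
  fixes p F :: "nat \<Rightarrow> real"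
  assumes "\<forall>i<K. p i \<ge> 0" "(\<Sum>i<K. p i) = 1" "j<K" "p j \<ge> 1-e" "\<forall>i<K. \<bar>F i\<bar> \<le> C"
  shows "\<bar>(\<Sum>i<K. p i * F i) - F j\<bar> \<le> 2*e*C"
proof -
  have "(\<Sum>i<K. p i * F i) - F j = (\<Sum>i<K. p i * (F i - F j))"
    using assms(2) by (simp add: algebra_simps sum_subtractf sum_distrib_right[symmetric] sum_distrib_left[symmetric])
  also have "\<bar>\<dots>\<bar> \<le> (\<Sum>i<K. \<bar>p i * (F i - F j)\<bar>)" by (rule sum_abs)
  also have "\<dots> \<le> (\<Sum>i<K. p i * (if i = j then 0 else 2*C))"
  proof (rule sum_mono)
    fix i assume i: "i \<in> {..<K}"
    have "\<bar>F i - F j\<bar> \<le> 2*C" using assms(5) i assms(3) by (smt (verit) lessThan_iff)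
    then show "\<bar>p i * (F i - F j)\<bar> \<le> p i * (if i = j then 0 else 2*C)"
      using assms(1) i by (auto simp: abs_mult intro: mult_left_mono)
  qed
  also have "\<dots> = 2*C * (\<Sum>i\<in>{..<K}-{j}. p i)"
    by (simp add: sum_distrib_left mult.commute if_distrib sum.If_cases Diff_eq Int_commute)
  also have "(\<Sum>i\<in>{..<K}-{j}. p i) = 1 - p j"
    using assms(2,3) by (simp add: sum_diff1)
  also have "2*C*(1 - p j) \<le> 2*e*C"
  proof -
    have "C \<ge> 0" using assms(5) assms(3) by (meson abs_ge_zero order_trans)
    then have "C*(1 - p j) \<le> C*e" using assms(4) by (intro mult_left_mono) auto
    moreover have "2*C*(1-p j) = 2*(C*(1-p j))" "2*e*C = 2*(C*e)" by simp_all
    ultimately show ?thesis by linarith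
  qed
  finally show ?thesis .
qed
theorem mainTheorem12:
  fixes M :: "'w measure" and N :: "'x measure"
    and X :: "'w \<Rightarrow> 'x" and xi Y :: "'w \<Rightarrow> real"
    and K :: nat and Omega :: "nat \<Rightarrow> 'x set" and fstar :: "nat \<Rightarrow> 'x \<Rightarrow> real"
    and f :: "nat \<Rightarrow> 'p \<Rightarrow> 'x \<Rightarrow> real" and a :: "nat \<Rightarrow> 'q \<Rightarrow> 'x \<Rightarrow> real"
    and Theta :: "(nat \<Rightarrow> 'p) set" and Phi :: "'q set"
    and B Bstu gamma eta eps :: real
  assumes PM: "prob_space M"
    and X_meas: "X \<in> measurable M N"
    and K_pos: "K \<ge> 1"
    and Omega_meas: "\<And>k. k < K \<Longrightarrow> Omega k \<in> sets N"
    and Omega_disj: "disjoint_family_on Omega {..<K}"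
    and Omega_cover: "(\<Union>k<K. Omega k) = space N"
    and fstar_meas: "\<And>k. k < K \<Longrightarrow> fstar k \<in> borel_measurable N"
    and mu_bdd: "AE w in M. \<bar>teacher_mu K Omega fstar (X w)\<bar> \<le> B"
    and xi_meas: "xi \<in> borel_measurable M"
    and Y_def: "\<And>w. Y w = teacher_mu K Omega fstar (X w) + xi w"
    and xi_cond: "AE w in M. real_cond_exp M (vimage_algebra (space M) X N) xi w = 0"
    and xi_sq: "integrable M (\<lambda>w. (xi w)\<^sup>2)"
    and f_meas: "\<And>theta k. theta \<in> Theta \<Longrightarrow> k < K \<Longrightarrow> f k (theta k) \<in> borel_measurable N"
    and a_meas: "\<And>phi k. phi \<in> Phi \<Longrightarrow> k < K \<Longrightarrow> a k phi \<in> borel_measurable N"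
    and f_bdd: "\<And>theta k x. theta \<in> Theta \<Longrightarrow> k < K \<Longrightarrow> x \<in> space N \<Longrightarrow> \<bar>f k (theta k) x\<bar> \<le> Bstu"
    and gamma_pos: "gamma > 0"
    and eta_rng: "0 \<le> eta" "eta < 1"
    and gap: "\<And>theta. theta \<in> Theta \<Longrightarrow>
               \<exists>pm. admissible_matching (distr M N X) K Omega fstar f gamma eta theta pm"
    and eps_rng: "0 < eps" "eps < 1/2"
    and eps_gap: "2 * eps * Bstu \<le> 1/2 * sqrt gamma"
  shows "\<forall>theta\<in>Theta. \<forall>phi\<in>Phi. \<forall>tau>0. \<forall>pm.
           admissible_matching (distr M N X) K Omega fstar f gamma eta theta pm \<longrightarrow>
           ((\<integral>w. (teacher_mu K Omega fstar (X w) - student_h K f theta a phi tau (X w))\<^sup>2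
                  * indicator (confident_region N K a phi tau eps) (X w) \<partial>M)
              \<ge> gamma / 4 * max (measure (distr M N X) (mis_event N K Omega pm a phi tau eps)
                                   - real K * (real K - 1) * eta) 0)
           \<and> (\<forall>R::real.
               (\<integral>w. (teacher_mu K Omega fstar (X w) - student_h K f theta a phi tau (X w))\<^sup>2 \<partial>M) \<le> R
               \<longrightarrow> measure (distr M N X) (mis_event N K Omega pm a phi tau eps)
                     \<le> 4 * R / gamma + real K * (real K - 1) * eta)"
proof (intro ballI allI impI)
  fix theta phi pm and tau :: real
  assume th: "theta \<in> Theta" and ph: "phi \<in> Phi" and tau: "tau > 0"
    and adm: "admissible_matching (distr M N X) K Omega fstar f gamma eta theta pm"
  interpret M: prob_space M by (rule PM)
  define P where "P = distr M N X"
  interpret P: prob_space P unfolding P_def by (rule M.prob_space_distr[OF X_meas])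
  define mu where "mu = teacher_mu K Omega fstar"
  define h where "h = student_h K f theta a phi tau"
  define G where "G = confident_region N K a phi tau eps"
  define E where "E = mis_event N K Omega pm a phi tau eps"
  define Bad where "Bad = (\<Union>k<K. \<Union>j\<in>{..<K}-{pm k}. {x \<in> Omega k. (f j (theta j) x - fstar k x)\<^sup>2 \<le> gamma})"
  have sP: "sets P = sets N" "space P = space N" unfolding P_def by auto
  have Om_sub: "\<And>k. k < K \<Longrightarrow> Omega k \<subseteq> space N" using Omega_cover by blast
  have mu_m: "mu \<in> borel_measurable N"
    unfolding mu_def teacher_mu_def using Omega_meas fstar_meas by measurable
  have gate_m: "\<And>k. k < K \<Longrightarrow> (\<lambda>x. gate K a phi tau k x) \<in> borel_measurable N"
    unfolding gate_def using a_meas[OF ph] by measurable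
  have h_m: "h \<in> borel_measurable N"
    unfolding h_def student_h_def using gate_m f_meas[OF th] by measurable
  have "0 \<in> {..<K}" using K_pos by auto
  then have Kne: "{..<K} \<noteq> {}" by blast
  have G_eq: "G = {x \<in> space N. \<exists>k\<in>{..<K}. gate K a phi tau k x > 1 - eps}"
  proof -
    have "\<And>x. Max ((\<lambda>k. gate K a phi tau k x) ` {..<K}) > 1 - eps \<longleftrightarrow> (\<exists>k\<in>{..<K}. gate K a phi tau k x > 1 - eps)"
      using Kne by (subst Max_gr_iff) auto
    then show ?thesis unfolding G_def confident_region_def by auto
  qed
  have G_s: "G \<in> sets N"
    unfolding G_eq using gate_m by (intro sets.sets_Collect_finite_Ex) auto
  have E_eq: "E = {x \<in> space N. \<exists>k\<in>{..<K}. \<exists>j\<in>{..<K}. x \<in> Omega k \<and> j \<noteq> pm k \<and> gate K a phi tau j x \<ge> 1 - eps} \<inter> G"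
    unfolding E_def G_def mis_event_def by auto
  have E_s: "E \<in> sets N"
    unfolding E_eq using G_s gate_m Omega_meas
    by (intro sets.Int sets.sets_Collect_finite_Ex) auto
  have bad_s: "\<And>k j. k < K \<Longrightarrow> j < K \<Longrightarrow> {x \<in> Omega k. (f j (theta j) x - fstar k x)\<^sup>2 \<le> gamma} \<in> sets N"
  proof -
    fix k j assume k: "k < K" and j: "j < K"
    have "{x \<in> Omega k. (f j (theta j) x - fstar k x)\<^sup>2 \<le> gamma} = Omega k \<inter> {x \<in> space N. (f j (theta j) x - fstar k x)\<^sup>2 \<le> gamma}"
      using Om_sub[OF k] by auto
    also have "\<dots> \<in> sets N"
      using Omega_meas[OF k] f_meas[OF th j] fstar_meas[OF k] by measurable
    finally show "{x \<in> Omega k. (f j (theta j) x - fstar k x)\<^sup>2 \<le> gamma} \<in> sets N" .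
  qed
  have Bad_s: "Bad \<in> sets N"
    unfolding Bad_def using bad_s by (intro sets.finite_UN) auto
  have pw: "gamma/4 \<le> (mu x - h x)\<^sup>2 * indicator G x"
    if x: "x \<in> space N" "x \<in> E" "x \<notin> Bad" for x
  proof -
    from x(2) obtain k j where kj: "k < K" "j < K" "x \<in> Omega k" "j \<noteq> pm k"
        "gate K a phi tau j x \<ge> 1 - eps" and xG: "x \<in> G"
      unfolding E_def mis_event_def G_def by blast
    have "mu x = (\<Sum>i<K. if i = k then fstar k x else 0)"
      unfolding mu_def teacher_mu_def
    proof (rule sum.cong[OF refl])
      fix i assume i: "i \<in> {..<K}"
      show "indicator (Omega i) x * fstar i x = (if i = k then fstar k x else 0)"
      proof (cases "i = k")
        case False
        then have "x \<notin> Omega i" using Omega_disj kj i unfolding disjoint_family_on_def by auto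
        then show ?thesis using False by simp
      qed (use kj in simp)
    qed
    then have mux: "mu x = fstar k x" using kj(1) by simp
    have "\<not> (f j (theta j) x - fstar k x)\<^sup>2 \<le> gamma"
      using x(3) kj unfolding Bad_def by blast
    then have gap1: "(f j (theta j) x - fstar k x)\<^sup>2 > gamma" by simp
    have close: "\<bar>h x - f j (theta j) x\<bar> \<le> 2*eps*Bstu"
      unfolding h_def student_h_def
      using gate_pos[OF K_pos, THEN less_imp_le] gate_sum[OF K_pos] kj f_bdd[OF th _ x(1)]
      by (intro conv_close[where K=K and p="\<lambda>i. gate K a phi tau i x" and F="\<lambda>i. f i (theta i) x"])
         (auto intro: less_imp_le)
    have "sqrt gamma < sqrt ((f j (theta j) x - fstar k x)\<^sup>2)"
      using gap1 by (rule real_sqrt_less_mono)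
    then have s1: "sqrt gamma < \<bar>f j (theta j) x - fstar k x\<bar>" by simp
    have s2: "sqrt gamma / 2 \<le> \<bar>mu x - h x\<bar>" using s1 close eps_gap mux by linarith
    have "(sqrt gamma / 2)\<^sup>2 \<le> \<bar>mu x - h x\<bar>\<^sup>2"
      using s2 gamma_pos by (intro power_mono) auto
    then have "gamma / 4 \<le> (mu x - h x)\<^sup>2"
      using gamma_pos by (simp add: power_divide)
    then show ?thesis using xG by simp
  qed
  have hb: "\<bar>h x\<bar> \<le> Bstu" if x: "x \<in> space N" for x
    unfolding h_def student_h_def
    using gate_pos[OF K_pos, THEN less_imp_le] gate_sum[OF K_pos] f_bdd[OF th _ x]
    by (intro conv_bound[where K=K]) (auto intro: less_imp_le)
  have Xs: "\<And>w. w \<in> space M \<Longrightarrow> X w \<in> space N" using measurable_space[OF X_meas] by blast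
  have bnd: "AE w in M. \<bar>(mu (X w) - h (X w))\<^sup>2\<bar> \<le> (B + Bstu)\<^sup>2"
    using mu_bdd AE_space
  proof (eventually_elim)
    case (elim w)
    have "\<bar>mu (X w) - h (X w)\<bar> \<le> B + Bstu"
      using elim hb[OF Xs[of w]] unfolding mu_def by linarith
    then have "\<bar>mu (X w) - h (X w)\<bar>\<^sup>2 \<le> (B + Bstu)\<^sup>2" by (intro power_mono) auto
    then show ?case by simp
  qed
  have bnd2: "AE w in M. \<bar>(mu (X w) - h (X w))\<^sup>2 * indicator G (X w)\<bar> \<le> (B + Bstu)\<^sup>2"
    using bnd by eventually_elim (auto simp: indicator_def)
  note [measurable] = X_meas mu_m h_m G_s E_s Bad_s
  have int_full: "integrable M (\<lambda>w. (mu (X w) - h (X w))\<^sup>2)"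
    using bnd by (intro M.integrable_const_bound[where B="(B + Bstu)\<^sup>2"]) auto
  have int_ind: "integrable M (\<lambda>w. (mu (X w) - h (X w))\<^sup>2 * indicator G (X w))"
    using bnd2 by (intro M.integrable_const_bound[where B="(B + Bstu)\<^sup>2"]) auto
  have EB_s: "E - Bad \<in> sets N" by auto
  have int_lo: "(\<integral>w. gamma/4 * indicator (E - Bad) (X w) \<partial>M) = gamma/4 * measure P (E - Bad)"
  proof -
    have "(\<integral>w. (indicator (E - Bad) (X w) :: real) \<partial>M) = integral\<^sup>L P (indicator (E - Bad) :: 'x \<Rightarrow> real)"
      unfolding P_def by (rule integral_distr[symmetric]) auto
    also have "\<dots> = measure P (E - Bad)" using sP EB_s sets.sets_into_space by simp
    finally show ?thesis by simp
  qed
  have lo: "gamma/4 * measure P (E - Bad) \<le> (\<integral>w. (mu (X w) - h (X w))\<^sup>2 * indicator G (X w) \<partial>M)"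
    unfolding int_lo[symmetric]
  proof (rule integral_mono[OF _ int_ind])
    show "integrable M (\<lambda>w. gamma/4 * indicator (E - Bad) (X w))"
      using gamma_pos by (intro M.integrable_const_bound[where B="gamma/4"] AE_I2) (auto simp: indicator_def)
    fix w assume w: "w \<in> space M"
    show "gamma/4 * indicator (E - Bad) (X w) \<le> (mu (X w) - h (X w))\<^sup>2 * indicator G (X w)"
      using pw[OF Xs[OF w]] by (auto simp: indicator_def)
  qed
  have mE: "measure P E \<le> measure P (E - Bad) + measure P Bad"
  proof -
    have "measure P E \<le> measure P ((E - Bad) \<union> Bad)"
      using EB_s Bad_s sP by (intro P.finite_measure_mono) auto
    also have "\<dots> \<le> measure P (E - Bad) + measure P Bad"
      using EB_s Bad_s sP by (intro measure_Un_le) auto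
    finally show ?thesis .
  qed
  have adm2: "\<And>k j. k < K \<Longrightarrow> j < K \<Longrightarrow> j \<noteq> pm k \<Longrightarrow>
      measure P {x \<in> Omega k. (f j (theta j) x - fstar k x)\<^sup>2 \<le> gamma} \<le> eta"
    and perm: "pm permutes {..<K}"
    using adm unfolding admissible_matching_def P_def by auto
  have mB: "measure P Bad \<le> real K * (real K - 1) * eta"
  proof -
    have "measure P Bad \<le> (\<Sum>k<K. measure P (\<Union>j\<in>{..<K}-{pm k}. {x \<in> Omega k. (f j (theta j) x - fstar k x)\<^sup>2 \<le> gamma}))"
      unfolding Bad_def using bad_s sP by (intro measure_UNION_le) auto
    also have "\<dots> \<le> (\<Sum>k<K. (\<Sum>j\<in>{..<K}-{pm k}. measure P {x \<in> Omega k. (f j (theta j) x - fstar k x)\<^sup>2 \<le> gamma}))"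
      using bad_s sP by (intro sum_mono measure_UNION_le) auto
    also have "\<dots> \<le> (\<Sum>k<K. (\<Sum>j\<in>{..<K}-{pm k}. eta))"
      using adm2 by (intro sum_mono) auto
    also have "\<dots> = (\<Sum>k<K. real (K - 1) * eta)"
    proof (rule sum.cong[OF refl])
      fix k assume "k \<in> {..<K}"
      then have "pm k \<in> {..<K}" using permutes_in_image[OF perm] by simp
      then show "(\<Sum>j\<in>{..<K}-{pm k}. eta) = real (K - 1) * eta" by simp
    qed
    also have "\<dots> = real K * (real K - 1) * eta" using K_pos by (simp add: of_nat_diff)
    finally show ?thesis .
  qed
  have main: "(\<integral>w. (mu (X w) - h (X w))\<^sup>2 * indicator G (X w) \<partial>M) \<ge> gamma / 4 * max (measure P E - real K * (real K - 1) * eta) 0"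
  proof -
    have nn: "0 \<le> (\<integral>w. (mu (X w) - h (X w))\<^sup>2 * indicator G (X w) \<partial>M)"
      by (intro integral_nonneg_AE) (auto simp: indicator_def)
    have "gamma / 4 * (measure P E - real K * (real K - 1) * eta) \<le> gamma/4 * measure P (E - Bad)"
      using mE mB gamma_pos by (intro mult_left_mono) auto
    then have c: "gamma / 4 * (measure P E - real K * (real K - 1) * eta) \<le> (\<integral>w. (mu (X w) - h (X w))\<^sup>2 * indicator G (X w) \<partial>M)"
      using lo by linarith
    show ?thesis
    proof (cases "measure P E - real K * (real K - 1) * eta \<ge> 0")
      case True then show ?thesis using c by (simp add: max_def)
    next
      case False then show ?thesis using nn by (simp add: max_def)
    qed
  qed
  have full_ge: "(\<integral>w. (mu (X w) - h (X w))\<^sup>2 * indicator G (X w) \<partial>M) \<le> (\<integral>w. (mu (X w) - h (X w))\<^sup>2 \<partial>M)"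
    using int_ind int_full by (intro integral_mono) (auto simp: indicator_def)
  have final: "gamma / 4 * max (measure P E - real K * (real K - 1) * eta) 0
       \<le> (\<integral>w. (mu (X w) - h (X w))\<^sup>2 * indicator G (X w) \<partial>M) \<and>
     (\<forall>R::real. (\<integral>w. (mu (X w) - h (X w))\<^sup>2 \<partial>M) \<le> R \<longrightarrow>
        measure P E \<le> 4 * R / gamma + real K * (real K - 1) * eta)"
  proof (intro conjI allI impI)
    show "gamma / 4 * max (measure P E - real K * (real K - 1) * eta) 0
       \<le> (\<integral>w. (mu (X w) - h (X w))\<^sup>2 * indicator G (X w) \<partial>M)" using main by simp
    fix R assume R: "(\<integral>w. (mu (X w) - h (X w))\<^sup>2 \<partial>M) \<le> R"
    have "gamma / 4 * (measure P E - real K * (real K - 1) * eta) \<le> R"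
    proof -
      have "gamma / 4 * (measure P E - real K * (real K - 1) * eta) \<le> gamma / 4 * max (measure P E - real K * (real K - 1) * eta) 0"
        using gamma_pos by (intro mult_left_mono) auto
      then show ?thesis using main full_ge R by linarith
    qed
    then have "measure P E - real K * (real K - 1) * eta \<le> 4 * R / gamma"
      using gamma_pos by (simp add: pos_le_divide_eq mult.commute)
    then show "measure P E \<le> 4 * R / gamma + real K * (real K - 1) * eta" by linarith
  qed
  then show "gamma / 4 * max (measure (distr M N X) (mis_event N K Omega pm a phi tau eps) - real K * (real K - 1) * eta) 0 \<le> (\<integral>w. (teacher_mu K Omega fstar (X w) - student_h K f theta a phi tau (X w))\<^sup>2 * indicator (confident_region N K a phi tau eps) (X w) \<partial>M) \<and> (\<forall>R::real. (\<integral>w. (teacher_mu K Omega fstar (X w) - student_h K f theta a phi tau (X w))\<^sup>2 \<partial>M) \<le> R \<longrightarrow> measure (distr M N X) (mis_event N K Omega pm a phi tau eps) \<le> 4 * R / gamma + real K * (real K - 1) * eta)"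
    unfolding mu_def h_def G_def E_def P_def .
qed

end
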